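(* Fix $q\in[0,1)$. For $\varepsilon\in(0,1-q)$ let $\mathcal{I}_1(\varepsilon)$ be the instance of the online volunteer notification problem with $V=1$, $S=2$, $T=2$, $g(\tau)=q(1-q)^{\tau-1}$ for $\tau\in\mathbb{N}$, arrival probabilities $\lambda_{1,1}=1$, $\lambda_{2,2}=\frac{\varepsilon}{1-q}$ (all other $\lambda_{s,t}=0$), and match probabilities $p_{1,1}=\varepsilon$, $p_{1,2}=1$. Then for every $\delta>0$ there exists $\varepsilon_0>0$ such that for all $\varepsilon\in(0,\varepsilon_0)$, every online policy completes in expectation at most $\left(\frac{1}{2-q}+\delta\right)\mathbf{LP}_{\mathcal{I}_1(\varepsilon)}$ tasks.
   Context: Online volunteer notification problem. An instance $\mathcal{I}$ consists of volunteers $[V]$, task types $[S]$, horizon $T$, arrival probabilities $\lambda_{s,t}\ge0$ with $\sum_s\lambda_{s,t}\le1$, match probabilities $p_{v,s}\in[0,1]$, and a probability mass function $g$ on the positive integers with CDF $G(\tau)=\sum_{i\le\tau}g(i)$, $G(0)=0$. In each period $t$ at most one task arrives, of type $s$ with probability $\lambda_{s,t}$, independently across periods. All volunteers start active. Upon an arrival the platform immediately and irrevocably notifies a subset of volunteers; each notified active volunteer $v$ responds positively independently with probability $p_{v,s}$; the task is completed iff at least one does. A volunteer active and notified at time $t$ becomes inactive (regardless of response) and active again at $t+Z$, $Z\sim g$ independent; inactive volunteers ignore notifications. An online policy decides whom to notify using only information available up to the current period. $\mathbf{LP}_{\mathcal{I}}=\max\sum_{t,s}\lambda_{s,t}\min\{\sum_vx_{v,s,t}p_{v,s},1\}$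 subject to $0\le x_{v,s,t}\le1$ and $\sum_{\tau=1}^t\sum_s\lambda_{s,\tau}x_{v,s,\tau}(1-G(t-\tau))\le1$ for all $v,t$. *)

theory Defs
  imports "HOL-Probability.Probability"
begin

text \<open>Volunteers are 1..nV, task types 1..nS, periods 1..nT.
  lam s t = arrival probability of type s in period t; pr v s = match probability;
  gd = probability mass function g of the inactivity duration (on positive integers;
  any missing mass 1 - sum g means the volunteer never becomes active again).\<close>

record vn_instance =
  nV :: nat
  nS :: nat
  nT :: nat
  lam :: "nat \<Rightarrow> nat \<Rightarrow> real"
  pr  :: "nat \<Rightarrow> nat \<Rightarrow> real"
  gd  :: "nat \<Rightarrow> real"

definition Gcdf :: "vn_instance \<Rightarrow> nat \<Rightarrow> real" where
  "Gcdf I \<tau> = (\<Sum>i=1..\<tau>. gd I i)"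

definition lp_feasible :: "vn_instance \<Rightarrow> (nat \<Rightarrow> nat \<Rightarrow> nat \<Rightarrow> real) \<Rightarrow> bool" where
  "lp_feasible I x \<longleftrightarrow>
     (\<forall>v\<in>{1..nV I}. \<forall>s\<in>{1..nS I}. \<forall>t\<in>{1..nT I}. 0 \<le> x v s t \<and> x v s t \<le> 1) \<and>
     (\<forall>v\<in>{1..nV I}. \<forall>t\<in>{1..nT I}.
        (\<Sum>\<tau>=1..t. \<Sum>s=1..nS I. lam I s \<tau> * x v s \<tau> * (1 - Gcdf I (t - \<tau>))) \<le> 1)"

definition lp_obj :: "vn_instance \<Rightarrow> (nat \<Rightarrow> nat \<Rightarrow> nat \<Rightarrow> real) \<Rightarrow> real" where
  "lp_obj I x = (\<Sum>t=1..nT I. \<Sum>s=1..nS I.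
       lam I s t * min (\<Sum>v=1..nV I. x v s t * pr I v s) 1)"

definition LP :: "vn_instance \<Rightarrow> real" where
  "LP I = Sup (lp_obj I ` {x. lp_feasible I x})"

text \<open>Arrival in period t: Some s (type s) or None (no task).\<close>
definition arrival_pmf :: "vn_instance \<Rightarrow> nat \<Rightarrow> nat option pmf" where
  "arrival_pmf I t = embed_pmf (\<lambda>a. case a of
       None \<Rightarrow> 1 - (\<Sum>s=1..nS I. lam I s t)
     | Some s \<Rightarrow> (if s \<in> {1..nS I} then lam I s t else 0))"

text \<open>Inactivity duration Z: Some z with probability g z (z \<ge> 1); None = never
  returns (remaining mass, only relevant if g is defective).\<close>
definition delay_pmf :: "vn_instance \<Rightarrow> nat option pmf" where
  "delay_pmf I = embed_pmf (\<lambda>z. case z of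
       None \<Rightarrow> 1 - suminf (gd I)
     | Some k \<Rightarrow> (if 1 \<le> k then gd I k else 0))"

text \<open>Observation recorded for a period: (arrival, set of active volunteers,
  set of notified volunteers, set of volunteers that responded positively).\<close>
type_synonym obs = "nat option \<times> nat set \<times> nat set \<times> nat set"

text \<open>A (possibly randomized) online policy: given the observed history of past
  periods, the type of the current arrival and the current set of active volunteers,
  it chooses a (random) set of volunteers to notify.\<close>
type_synonym policy = "obs list \<Rightarrow> nat \<Rightarrow> nat set \<Rightarrow> nat set pmf"

text \<open>Hidden state: for each volunteer, the period from which it is active again
  (None = never again).\<close>
type_synonym vstate = "nat \<Rightarrow> nat option"

definition is_active :: "vstate \<Rightarrow> nat \<Rightarrow> nat \<Rightarrow> bool" where
  "is_active r t v \<longleftrightarrow> (case r v of None \<Rightarrow> False | Some k \<Rightarrow> k \<le> t)"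

text \<open>One period: distribution of (observation, new state, task completed?).
  The current period is t = length h + 1.\<close>
definition step_pmf :: "vn_instance \<Rightarrow> policy \<Rightarrow> obs list \<Rightarrow> vstate
                         \<Rightarrow> (obs \<times> vstate \<times> bool) pmf" where
  "step_pmf I \<pi> h r =
     (let t = Suc (length h); act = {v\<in>{1..nV I}. is_active r t v} in
      bind_pmf (arrival_pmf I t) (\<lambda>a. case a of
        None \<Rightarrow> return_pmf ((None, act, {}, {}), r, False)
      | Some s \<Rightarrow>
          bind_pmf (\<pi> h s act) (\<lambda>N.
            let M = N \<inter> act in
            bind_pmf (Pi_pmf M False (\<lambda>v. bernoulli_pmf (pr I v s))) (\<lambda>resp.
            bind_pmf (Pi_pmf M None (\<lambda>v. delay_pmf I)) (\<lambda>z.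
              let R = {v\<in>M. resp v};
                  r' = (\<lambda>v. if v \<in> M then map_option (\<lambda>d. t + d) (z v) else r v)
              in return_pmf ((Some s, act, N \<inter> {1..nV I}, R), r', R \<noteq> {}))))))"

fun exp_from :: "vn_instance \<Rightarrow> policy \<Rightarrow> nat \<Rightarrow> obs list \<Rightarrow> vstate \<Rightarrow> real" where
  "exp_from I \<pi> 0 h r = 0"
| "exp_from I \<pi> (Suc n) h r =
     measure_pmf.expectation (step_pmf I \<pi> h r)
       (\<lambda>(o', r', c). (if c then 1 else 0) + exp_from I \<pi> n (h @ [o']) r')"

definition expected_completed :: "vn_instance \<Rightarrow> policy \<Rightarrow> real" where
  "expected_completed I \<pi> = exp_from I \<pi> (nT I) [] (\<lambda>_. Some 0)"

definition I1 :: "real \<Rightarrow> real \<Rightarrow> vn_instance" where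
  "I1 q \<epsilon> = \<lparr> nV = 1, nS = 2, nT = 2,
     lam = (\<lambda>s t. if s = 1 \<and> t = 1 then 1 else if s = 2 \<and> t = 2 then \<epsilon> / (1 - q) else 0),
     pr = (\<lambda>v s. if v = 1 \<and> s = 1 then \<epsilon> else if v = 1 \<and> s = 2 then 1 else 0),
     gd = (\<lambda>\<tau>. if 1 \<le> \<tau> then q * (1 - q) ^ (\<tau> - 1) else 0) \<rparr>"

end

theory Submission
  imports Defs
begin


lemma arr_pmf:
  assumes q: "0 \<le> q" "q < 1" and e: "0 < \<epsilon>" "\<epsilon> < 1 - q"
  shows "pmf (arrival_pmf (I1 q \<epsilon>) t) a = (case a of
       None \<Rightarrow> 1 - (\<Sum>s=1..nS (I1 q \<epsilon>). lam (I1 q \<epsilon>) s t)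
     | Some s \<Rightarrow> (if s \<in> {1..nS (I1 q \<epsilon>)} then lam (I1 q \<epsilon>) s t else 0))"
  unfolding arrival_pmf_def
proof (rule pmf_embed_pmf)
  have le: "\<epsilon> / (1 - q) \<le> 1" "0 \<le> \<epsilon> / (1 - q)" using q e by auto
  have s12: "{1..2::nat} = {1,2}" "{Suc 0..2} = {Suc 0, 2}" by auto
  show "\<And>x. 0 \<le> (case x of None \<Rightarrow> 1 - (\<Sum>s = 1..nS (I1 q \<epsilon>). lam (I1 q \<epsilon>) s t)
          | Some s \<Rightarrow> if s \<in> {1..nS (I1 q \<epsilon>)} then lam (I1 q \<epsilon>) s t else 0)"
    using le by (auto simp: I1_def s12 split: option.split)
  show "(\<integral>\<^sup>+x. ennreal (case x of None \<Rightarrow> 1 - (\<Sum>s = 1..nS (I1 q \<epsilon>). lam (I1 q \<epsilon>) s t)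
          | Some s \<Rightarrow> if s \<in> {1..nS (I1 q \<epsilon>)} then lam (I1 q \<epsilon>) s t else 0) \<partial>count_space UNIV) = 1"
    apply (subst nn_integral_count_space'[where A="{None, Some 1, Some 2}"])
    using le by (auto simp: I1_def s12 split: option.split simp flip: ennreal_plus)
qed

lemma gd_sums:
  assumes q: "0 \<le> q" "q < 1"
  shows "gd (I1 q \<epsilon>) sums (if q = 0 then 0 else 1)"
proof (cases "q = 0")
  case True
  have "gd (I1 q \<epsilon>) = (\<lambda>_. 0)" using True by (auto simp: I1_def)
  then show ?thesis using True by simp
next
  case False
  have "(\<lambda>k. q * (1 - q) ^ k) sums (q * (1 / (1 - (1 - q))))"
    using q False by (intro sums_mult geometric_sums) auto
  then have "(\<lambda>k. gd (I1 q \<epsilon>) (Suc k)) sums 1" using False by (simp add: I1_def)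
  then have "gd (I1 q \<epsilon>) sums (1 + gd (I1 q \<epsilon>) 0)" by (subst sums_Suc_iff[symmetric])
  then show ?thesis using False by (simp add: I1_def)
qed

lemma delay_pmf_eq:
  assumes q: "0 \<le> q" "q < 1"
  shows "pmf (delay_pmf (I1 q \<epsilon>)) z = (case z of
       None \<Rightarrow> 1 - suminf (gd (I1 q \<epsilon>))
     | Some k \<Rightarrow> (if 1 \<le> k then gd (I1 q \<epsilon>) k else 0))"
  unfolding delay_pmf_def
proof (rule pmf_embed_pmf)
  let ?g = "gd (I1 q \<epsilon>)"
  have S: "?g sums (if q = 0 then 0 else 1)" by (rule gd_sums[OF q])
  have Sle: "suminf ?g \<le> 1" using sums_unique[OF S] by (simp split: if_splits)
  have gnn: "\<And>k. 0 \<le> ?g k" using q by (simp add: I1_def)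
  let ?f = "\<lambda>z. case z of None \<Rightarrow> 1 - suminf ?g | Some k \<Rightarrow> (if 1 \<le> k then ?g k else 0)"
  show "\<And>x. 0 \<le> ?f x" using Sle gnn by (auto split: option.split)
  have "(\<integral>\<^sup>+x. ennreal (?f x) \<partial>count_space UNIV) =
     (\<integral>\<^sup>+ x. ennreal (?f x) * indicator {None} x + ennreal (?f x) * indicator (range Some) x \<partial>count_space UNIV)"
    by (rule nn_integral_cong) (auto split: split_indicator option.split)
  also have "\<dots> = ennreal (1 - suminf ?g) + \<integral>\<^sup>+ x. ennreal (?f x) * indicator (range Some) x \<partial>count_space UNIV"
    by (subst nn_integral_add) auto
  also have "(\<integral>\<^sup>+ x. ennreal (?f x) * indicator (range Some) x \<partial>count_space UNIV)
      = \<integral>\<^sup>+ x. ennreal (?f x) \<partial>count_space (range Some)"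
    by (simp add: nn_integral_count_space_indicator)
  also have "count_space (range Some) = embed_measure (count_space UNIV) Some"
    by (simp add: embed_measure_count_space)
  also have "(\<integral>\<^sup>+ x. ennreal (?f x) \<partial>embed_measure (count_space UNIV) Some) =
      \<integral>\<^sup>+ k. ennreal (?g k) \<partial>count_space UNIV"
    by (subst nn_integral_embed_measure) (auto simp: measurable_embed_measure1 I1_def intro!: nn_integral_cong)
  also have "\<dots> = (\<Sum>k. ennreal (?g k))" by (rule nn_integral_count_space_nat)
  also have "\<dots> = ennreal (suminf ?g)" using gnn S by (intro suminf_ennreal2) (auto simp: sums_iff)
  also have "ennreal (1 - suminf ?g) + ennreal (suminf ?g) = 1"
    using Sle gnn S by (subst ennreal_plus[symmetric]) (auto intro: suminf_nonneg simp: sums_iff)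
  finally show "(\<integral>\<^sup>+x. ennreal (?f x) \<partial>count_space UNIV) = 1" .
qed



lemma exp_le_nn:
  fixes f :: "'a \<Rightarrow> real"
  assumes "\<And>x. x \<in> set_pmf p \<Longrightarrow> 0 \<le> f x" "(\<integral>\<^sup>+x. ennreal (f x) \<partial>p) \<le> ennreal B" "0 \<le> B"
  shows "measure_pmf.expectation p f \<le> B"
proof -
  have "measure_pmf.expectation p f = enn2real (\<integral>\<^sup>+x. ennreal (f x) \<partial>p)"
    using assms(1) by (intro integral_eq_nn_integral) (auto intro: AE_pmfI)
  also have "\<dots> \<le> B" using assms by (intro enn2real_leI)
  finally show ?thesis .
qed

lemma nn_ind_le1: "(\<integral>\<^sup>+y. ennreal (if P y then 1 else 0) \<partial>measure_pmf p) \<le> 1"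
proof -
  have "(\<integral>\<^sup>+y. ennreal (if P y then 1 else 0) \<partial>measure_pmf p) \<le> (\<integral>\<^sup>+y. 1 \<partial>measure_pmf p)"
    by (intro nn_integral_mono) auto
  also have "\<dots> = 1" by (simp add: measure_pmf.emeasure_space_1)
  finally show ?thesis .
qed

context
  fixes q \<epsilon> :: real
  assumes q: "0 \<le> q" "q < 1" and e: "0 < \<epsilon>" "\<epsilon> < 1 - q"
begin

lemma step2:
  assumes "length h = Suc 0"
  shows "exp_from (I1 q \<epsilon>) \<pi> (Suc 0) h r \<le> \<epsilon> / (1 - q) * (if is_active r 2 1 then 1 else 0)"
proof -
  let ?I = "I1 q \<epsilon>"
  let ?A = "if is_active r 2 1 then 1 else 0 :: real"
  have c2: "0 \<le> \<epsilon> / (1 - q)" using q e by auto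
  have "exp_from ?I \<pi> (Suc 0) h r = measure_pmf.expectation (step_pmf ?I \<pi> h r) (\<lambda>x. if snd (snd x) then 1 else 0)"
    by (simp add: case_prod_unfold)
  also have "\<dots> \<le> \<epsilon> / (1 - q) * ?A"
  proof (rule exp_le_nn)
    show "0 \<le> \<epsilon> / (1 - q) * ?A" using c2 by simp
    show "\<And>x. 0 \<le> (if snd (snd x) then 1 else (0::real))" by simp
    show "(\<integral>\<^sup>+x. ennreal (if snd (snd x) then 1 else 0) \<partial>measure_pmf (step_pmf ?I \<pi> h r)) \<le> ennreal (\<epsilon> / (1 - q) * ?A)"
      unfolding step_pmf_def Let_def nn_integral_bind_pmf
      apply (rule order_trans[OF nn_integral_mono[where v = "\<lambda>a. if a = None then 0 else ennreal ?A"]])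
      subgoal for a
        apply (cases a)
         apply simp
        subgoal for s
          apply (cases "is_active r 2 1")
           apply (simp del: nn_integral_bind_pmf add: nn_ind_le1)
          apply -
          apply (subgoal_tac "{v \<in> {1..nV (I1 q \<epsilon>)}. is_active r (Suc (length h)) v} = {}")
           apply (simp only: )
           apply simp
          using assms by (auto simp: I1_def numeral_2_eq_2)
        done
      apply (subst nn_integral_measure_pmf_support[where A="{None, Some 1, Some 2}"])
      using assms c2 apply (auto simp: set_pmf_iff arr_pmf[OF q e] split: option.splits)
      apply (auto simp: I1_def ennreal_mult' split: if_splits)
      done
  qed
  finally show ?thesis .
qed

lemma exp1_nn: "0 \<le> exp_from (I1 q \<epsilon>) \<pi> (Suc 0) h r"
  by (simp add: case_prod_unfold)

lemma c2_eq: "\<epsilon> + \<epsilon> / (1 - q) * q = \<epsilon> / (1 - q)"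
  using q by (simp add: field_simps)

lemma delay_part:
  "(\<integral>\<^sup>+y. ennreal ((if b then 1 else 0) + \<epsilon> / (1 - q) * (if y \<in> {Some 0, Some 1} then 1 else 0)) \<partial>measure_pmf (delay_pmf (I1 q \<epsilon>)))
   = ennreal ((if b then 1 else 0) + \<epsilon> / (1 - q) * q)"
proof -
  have c2: "0 \<le> \<epsilon> / (1 - q)" using q e by auto
  have "(\<integral>\<^sup>+y. ennreal ((if b then 1 else 0) + \<epsilon> / (1 - q) * (if y \<in> {Some 0, Some 1} then 1 else 0)) \<partial>measure_pmf (delay_pmf (I1 q \<epsilon>)))
     = (\<integral>\<^sup>+y. ennreal (if b then 1 else 0) + ennreal (\<epsilon> / (1 - q)) * indicator {Some 0, Some 1} y \<partial>measure_pmf (delay_pmf (I1 q \<epsilon>)))"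
    using c2 by (intro nn_integral_cong) (auto simp: indicator_def ennreal_plus)
  also have "\<dots> = ennreal (if b then 1 else 0) + ennreal (\<epsilon> / (1 - q)) * emeasure (measure_pmf (delay_pmf (I1 q \<epsilon>))) {Some 0, Some 1}"
    by (subst nn_integral_add) (auto simp: nn_integral_cmult_indicator measure_pmf.emeasure_space_1)
  also have "emeasure (measure_pmf (delay_pmf (I1 q \<epsilon>))) {Some 0, Some 1} = ennreal q"
    apply (subst emeasure_measure_pmf_finite)
     apply (auto simp: delay_pmf_eq[OF q])
    apply (auto simp: I1_def)
    done
  also have "ennreal (\<epsilon> / (1 - q)) * ennreal q = ennreal (\<epsilon> / (1 - q) * q)"
    using c2 q by (intro ennreal_mult[symmetric]) auto
  also have "ennreal (if b then 1 else 0) + ennreal (\<epsilon> / (1 - q) * q) = ennreal ((if b then 1 else 0) + \<epsilon> / (1 - q) * q)"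
    using c2 q e by (intro ennreal_plus[symmetric]) auto
  finally show ?thesis .
qed

lemma bern_part:
  "(\<integral>\<^sup>+b. ennreal ((if b then 1 else 0) + \<epsilon> / (1 - q) * q) \<partial>measure_pmf (bernoulli_pmf \<epsilon>))
   = ennreal (\<epsilon> / (1 - q))"
proof -
  have c2: "0 \<le> \<epsilon> / (1 - q) * q" using q e by auto
  have "(\<integral>\<^sup>+b. ennreal ((if b then 1 else 0) + \<epsilon> / (1 - q) * q) \<partial>measure_pmf (bernoulli_pmf \<epsilon>))
     = ennreal (1 + \<epsilon> / (1 - q) * q) * ennreal \<epsilon> + ennreal (\<epsilon> / (1 - q) * q) * ennreal (1 - \<epsilon>)"
    using q e by (subst nn_integral_measure_pmf_support[where A = UNIV]) (auto simp: UNIV_bool)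
  also have "\<dots> = ennreal ((1 + \<epsilon> / (1 - q) * q) * \<epsilon> + (\<epsilon> / (1 - q) * q) * (1 - \<epsilon>))"
  proof -
    have A: "ennreal (1 + \<epsilon> / (1 - q) * q) * ennreal \<epsilon> = ennreal ((1 + \<epsilon> / (1 - q) * q) * \<epsilon>)"
      using c2 e by (intro ennreal_mult[symmetric]) auto
    have B: "ennreal (\<epsilon> / (1 - q) * q) * ennreal (1 - \<epsilon>) = ennreal ((\<epsilon> / (1 - q) * q) * (1 - \<epsilon>))"
      using c2 e q by (intro ennreal_mult[symmetric]) auto
    show ?thesis unfolding A B using c2 e q by (intro ennreal_plus[symmetric]) auto
  qed
  also have "(1 + \<epsilon> / (1 - q) * q) * \<epsilon> + (\<epsilon> / (1 - q) * q) * (1 - \<epsilon>) = \<epsilon> + \<epsilon> / (1 - q) * q"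
  proof -
    have "\<And>X::real. (1 + X) * \<epsilon> + X * (1 - \<epsilon>) = \<epsilon> + X" by algebra
    then show ?thesis .
  qed
  also have "\<dots> = \<epsilon> / (1 - q)" by (rule c2_eq)
  finally show ?thesis .
qed

lemma pr1: "pr (I1 q \<epsilon>) (Suc 0) (Suc 0) = \<epsilon>" by (simp add: I1_def)

lemma sum1: "(\<Sum>x\<in>{a}. f x) = f a" by simp

lemma arr1_supp: "x \<in> set_pmf (arrival_pmf (I1 q \<epsilon>) (Suc 0)) \<Longrightarrow> x = Some 1"
  apply (auto simp: set_pmf_iff arr_pmf[OF q e] split: option.splits)
  apply (auto simp: I1_def split: if_splits)
  apply (subgoal_tac "{Suc 0..2} = {Suc 0, 2}")
  apply auto
  done

lemma arr1_one: "pmf (arrival_pmf (I1 q \<epsilon>) (Suc (length []))) (Some 1) = 1"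
  by (simp add: arr_pmf[OF q e]) (simp add: I1_def)

lemma act1: "{v \<in> {1..nV (I1 q \<epsilon>)}. is_active (\<lambda>_. Some 0) (Suc (length [])) v} = {1}"
  by (auto simp: I1_def is_active_def)

lemma step1: "expected_completed (I1 q \<epsilon>) \<pi> \<le> \<epsilon> / (1 - q)"
proof -
  let ?I = "I1 q \<epsilon>"
  let ?r0 = "\<lambda>_::nat. Some (0::nat)"
  let ?c = "\<epsilon> / (1 - q)"
  let ?G = "\<lambda>x::obs \<times> vstate \<times> bool. (if snd (snd x) then 1 else 0) + ?c * (if is_active (fst (snd x)) 2 1 then 1 else 0)"
  have c2: "0 \<le> ?c" using q e by auto
  have nT: "nT ?I = Suc (Suc 0)" by (simp add: I1_def)
  have "expected_completed ?I \<pi> = measure_pmf.expectation (step_pmf ?I \<pi> [] ?r0)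
      (\<lambda>x. (if snd (snd x) then 1 else 0) + exp_from ?I \<pi> (Suc 0) [fst x] (fst (snd x)))"
    unfolding expected_completed_def nT by (simp add: case_prod_unfold)
  also have "\<dots> \<le> ?c"
  proof (rule exp_le_nn)
    show "0 \<le> ?c" by (rule c2)
    show "\<And>x. 0 \<le> (if snd (snd x) then 1 else 0) + exp_from ?I \<pi> (Suc 0) [fst x] (fst (snd x))"
      using exp1_nn by (simp add: add_nonneg_nonneg)
    have "(\<integral>\<^sup>+x. ennreal ((if snd (snd x) then 1 else 0) + exp_from ?I \<pi> (Suc 0) [fst x] (fst (snd x))) \<partial>measure_pmf (step_pmf ?I \<pi> [] ?r0))
       \<le> (\<integral>\<^sup>+x. ennreal (?G x) \<partial>measure_pmf (step_pmf ?I \<pi> [] ?r0))"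
      by (intro nn_integral_mono ennreal_leI add_left_mono step2) simp
    also have "\<dots> \<le> ennreal ?c"
      unfolding step_pmf_def Let_def nn_integral_bind_pmf
      apply (subst nn_integral_measure_pmf_support[where A = "{Some 1}"])
         apply simp
        apply simp
      subgoal for x using arr1_supp[of x] by simp
      apply (simp only: act1 sum1 arr1_one ennreal_1 mult_1_right option.case nn_integral_bind_pmf)
      apply (rule order_trans[OF nn_integral_mono[where v="\<lambda>_. ennreal ?c"]])
      subgoal for N
        apply (cases "1 \<in> N")
        apply (subgoal_tac "N \<inter> {1} = {1}")
        apply (simp only: Pi_pmf_singleton)
          apply simp
          apply (subst nn_integral_cong[where v = "\<lambda>y. ennreal ((if y then 1 else 0) + ?c * q)"])
           subgoal for b
             apply (subst delay_part[symmetric, of b])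
             apply (rule nn_integral_cong)
             apply (auto simp: is_active_def split: option.splits)
             done
          apply (simp only: pr1 bern_part)
          apply simp
         apply auto[1]
        done
      apply (simp add: measure_pmf.emeasure_space_1)
      done
    finally show "(\<integral>\<^sup>+x. ennreal ((if snd (snd x) then 1 else 0) + exp_from ?I \<pi> (Suc 0) [fst x] (fst (snd x))) \<partial>measure_pmf (step_pmf ?I \<pi> [] ?r0)) \<le> ennreal ?c" .
  qed
  finally show ?thesis .
qed

definition x0 :: "nat \<Rightarrow> nat \<Rightarrow> nat \<Rightarrow> real" where
  "x0 v s t = (if s = 1 then 1 - \<epsilon> / (1 - q) else 1)"

lemma s12: "{1..2::nat} = {1,2}" by auto

lemma lamI: "lam (I1 q \<epsilon>) s t = (if s = 1 \<and> t = 1 then 1 else if s = 2 \<and> t = 2 then \<epsilon> / (1 - q) else 0)"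
  by (simp add: I1_def)
lemma prI: "pr (I1 q \<epsilon>) v s = (if v = 1 \<and> s = 1 then \<epsilon> else if v = 1 \<and> s = 2 then 1 else 0)"
  by (simp add: I1_def)
lemma nI: "nS (I1 q \<epsilon>) = 2" "nT (I1 q \<epsilon>) = 2" "nV (I1 q \<epsilon>) = 1"
  by (simp_all add: I1_def)
lemma sum12: "(\<Sum>s=1..2::nat. f s) = f 1 + f 2"
  unfolding s12 by simp

lemma x0_feasible: "lp_feasible (I1 q \<epsilon>) x0"
proof -
  have c: "0 \<le> \<epsilon> / (1 - q)" "\<epsilon> / (1 - q) < 1" using q e by auto
  have G0: "Gcdf (I1 q \<epsilon>) 0 = 0" by (simp add: Gcdf_def)
  have G1: "Gcdf (I1 q \<epsilon>) 1 = q" "Gcdf (I1 q \<epsilon>) (Suc 0) = q" by (simp_all add: Gcdf_def I1_def)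
  have t: "t \<in> {1..2} \<Longrightarrow> t = 1 \<or> t = 2" for t :: nat by auto
  have "(1 - \<epsilon> / (1 - q)) * (1 - q) \<le> 1 - \<epsilon> / (1 - q)"
    using c q by (intro mult_left_le) auto
  then have k: "(1 - \<epsilon> / (1 - q)) * (1 - q) + \<epsilon> / (1 - q) \<le> 1" by simp
  have A: "\<forall>v\<in>{1..nV (I1 q \<epsilon>)}. \<forall>s\<in>{1..nS (I1 q \<epsilon>)}. \<forall>t\<in>{1..nT (I1 q \<epsilon>)}. 0 \<le> x0 v s t \<and> x0 v s t \<le> 1"
    using c by (simp add: x0_def)
  have S1: "(\<Sum>\<tau>=1..1. \<Sum>s=1..nS (I1 q \<epsilon>). lam (I1 q \<epsilon>) s \<tau> * x0 v s \<tau> * (1 - Gcdf (I1 q \<epsilon>) (1 - \<tau>))) = 1 - \<epsilon> / (1 - q)" for v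
    unfolding nI sum12 by (simp add: lamI G0 x0_def)
  have S2: "(\<Sum>\<tau>=1..2. \<Sum>s=1..nS (I1 q \<epsilon>). lam (I1 q \<epsilon>) s \<tau> * x0 v s \<tau> * (1 - Gcdf (I1 q \<epsilon>) (2 - \<tau>))) = (1 - \<epsilon> / (1 - q)) * (1 - q) + \<epsilon> / (1 - q)" for v
    unfolding nI sum12 by (simp add: lamI G0 G1 x0_def)
  have B: "\<forall>v\<in>{1..nV (I1 q \<epsilon>)}. \<forall>t\<in>{1..nT (I1 q \<epsilon>)}.
        (\<Sum>\<tau>=1..t. \<Sum>s=1..nS (I1 q \<epsilon>). lam (I1 q \<epsilon>) s \<tau> * x0 v s \<tau> * (1 - Gcdf (I1 q \<epsilon>) (t - \<tau>))) \<le> 1"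
  proof (intro ballI)
    fix v t assume "t \<in> {1..nT (I1 q \<epsilon>)}"
    then have "t = 1 \<or> t = 2" by (auto simp: I1_def)
    then show "(\<Sum>\<tau>=1..t. \<Sum>s=1..nS (I1 q \<epsilon>). lam (I1 q \<epsilon>) s \<tau> * x0 v s \<tau> * (1 - Gcdf (I1 q \<epsilon>) (t - \<tau>))) \<le> 1"
      using S1 S2 k c by auto
  qed
  show ?thesis unfolding lp_feasible_def using A B by blast
qed

lemma x0_obj: "lp_obj (I1 q \<epsilon>) x0 = (1 - \<epsilon> / (1 - q)) * \<epsilon> + \<epsilon> / (1 - q)"
proof -
  have c: "0 \<le> \<epsilon> / (1 - q)" "\<epsilon> / (1 - q) < 1" using q e by auto
  have "(1 - \<epsilon> / (1 - q)) * \<epsilon> \<le> 1 * 1" using c e q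
    by (intro mult_mono) auto
  then show ?thesis unfolding lp_obj_def
    unfolding nI sum12 by (simp add: lamI prI x0_def)
qed

lemma lp_obj_bound: "lp_obj (I1 q \<epsilon>) x \<le> (\<Sum>t=1..nT (I1 q \<epsilon>). \<Sum>s=1..nS (I1 q \<epsilon>). lam (I1 q \<epsilon>) s t)"
  unfolding lp_obj_def
proof (intro sum_mono)
  fix t s
  have "0 \<le> lam (I1 q \<epsilon>) s t" using q e by (simp add: I1_def)
  then show "lam (I1 q \<epsilon>) s t * min (\<Sum>v = 1..nV (I1 q \<epsilon>). x v s t * pr (I1 q \<epsilon>) v s) 1 \<le> lam (I1 q \<epsilon>) s t"
    by (simp add: mult_left_le)
qed

lemma LP_ge: "(1 - \<epsilon> / (1 - q)) * \<epsilon> + \<epsilon> / (1 - q) \<le> LP (I1 q \<epsilon>)"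
  unfolding LP_def x0_obj[symmetric]
  by (rule cSup_upper) (use x0_feasible lp_obj_bound in \<open>auto intro!: bdd_aboveI\<close>)

end

lemma arith_part:
  fixes q \<epsilon> \<delta> :: real
  assumes q: "0 \<le> q" "q < 1" and e: "0 < \<epsilon>" and d: "0 < \<delta>"
    and small: "(1 / (2 - q) + \<delta>) * \<epsilon> < \<delta>"
  shows "\<epsilon> / (1 - q) \<le> (1 / (2 - q) + \<delta>) * ((1 - \<epsilon> / (1 - q)) * \<epsilon> + \<epsilon> / (1 - q))"
proof -
  define k where "k = 1 / (1 - q)"
  define B where "B = 1 / (2 - q) + \<delta>"
  have k0: "0 < k" using q by (simp add: k_def)
  have c: "\<epsilon> / (1 - q) = k * \<epsilon>" by (simp add: k_def)
  have k2: "k * (2 - q) = 1 + k" using q by (simp add: k_def field_simps)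
  have key: "(1 + k) / (2 - q) = k" using q k2 by (simp add: divide_eq_eq)
  have "B * ((1 - k * \<epsilon>) * \<epsilon> + k * \<epsilon>) = B * (1 + k) * \<epsilon> - (B * \<epsilon>) * k * \<epsilon>"
    by (simp add: algebra_simps)
  also have "B * (1 + k) = k + \<delta> * (1 + k)" using key by (simp add: B_def algebra_simps)
  finally have eq: "B * ((1 - k * \<epsilon>) * \<epsilon> + k * \<epsilon>) = k * \<epsilon> + (\<delta> * (1 + k) * \<epsilon> - (B * \<epsilon>) * k * \<epsilon>)"
    by (simp add: algebra_simps)
  have "(B * \<epsilon>) * (k * \<epsilon>) \<le> \<delta> * (k * \<epsilon>)"
    using small k0 e by (intro mult_right_mono) (auto simp: B_def)
  also have "\<dots> \<le> \<delta> * ((1 + k) * \<epsilon>)"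
    using d e k0 by (intro mult_left_mono) auto
  finally have "0 \<le> \<delta> * (1 + k) * \<epsilon> - (B * \<epsilon>) * k * \<epsilon>" by (simp add: algebra_simps)
  then show ?thesis unfolding c B_def[symmetric] eq by simp
qed

theorem lemma4:
  fixes q :: real
  assumes "0 \<le> q" and "q < 1"
  shows "\<forall>\<delta>>0. \<exists>\<epsilon>0>0. \<forall>\<epsilon>. 0 < \<epsilon> \<and> \<epsilon> < \<epsilon>0 \<and> \<epsilon> < 1 - q \<longrightarrow>
           (\<forall>\<pi>. expected_completed (I1 q \<epsilon>) \<pi> \<le> (1 / (2 - q) + \<delta>) * LP (I1 q \<epsilon>))"
proof (intro allI impI)
  fix \<delta> :: real assume d: "0 < \<delta>"
  define B where "B = 1 / (2 - q) + \<delta>"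
  have "0 < 1 / (2 - q)" using assms by simp
  then have B0: "0 < B" using d unfolding B_def by (intro add_pos_pos)
  show "\<exists>\<epsilon>0>0. \<forall>\<epsilon>. 0 < \<epsilon> \<and> \<epsilon> < \<epsilon>0 \<and> \<epsilon> < 1 - q \<longrightarrow>
           (\<forall>\<pi>. expected_completed (I1 q \<epsilon>) \<pi> \<le> (1 / (2 - q) + \<delta>) * LP (I1 q \<epsilon>))"
  proof (intro exI[of _ "\<delta> / B"] conjI allI impI)
    show "0 < \<delta> / B" using d B0 by simp
    fix \<epsilon> :: real and \<pi> :: policy
    assume h: "0 < \<epsilon> \<and> \<epsilon> < \<delta> / B \<and> \<epsilon> < 1 - q"
    then have e: "0 < \<epsilon>" "\<epsilon> < 1 - q" by auto
    have small: "B * \<epsilon> < \<delta>" using h B0 by (simp add: field_simps)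
    have "expected_completed (I1 q \<epsilon>) \<pi> \<le> \<epsilon> / (1 - q)"
      by (rule step1[OF assms e])
    also have "\<dots> \<le> B * ((1 - \<epsilon> / (1 - q)) * \<epsilon> + \<epsilon> / (1 - q))"
      unfolding B_def by (rule arith_part[OF assms e(1) d small[unfolded B_def]])
    also have "\<dots> \<le> B * LP (I1 q \<epsilon>)"
      using B0 by (intro mult_left_mono LP_ge[OF assms e]) auto
    finally show "expected_completed (I1 q \<epsilon>) \<pi> \<le> (1 / (2 - q) + \<delta>) * LP (I1 q \<epsilon>)"
      by (simp add: B_def)
  qed
qed

end
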